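(* For every measurable classifier $f:\mathcal X\to\mathbb R$ and every loss $\ell:\mathbb R\times\{-1,+1\}\to\mathbb R_{+}$ for which the expectations below are finite, $$\mathbb E_{\tilde{\mathcal D}}\bigl[\ell_{\mathrm{peer}}(f(X),\tilde Y)\bigr]=(1-e_{-1}-e_{+1})\cdot\mathbb E_{\mathcal D}\bigl[\ell_{\mathrm{peer}}(f(X),Y)\bigr].$$
   Context: Let $\mathcal X\subseteq\mathbb R^d$ and let $(X,Y)$ be a random pair with distribution $\mathcal D$ on $\mathcal X\times\{-1,+1\}$, with $p:=\mathbb P(Y=+1)\in(0,1)$. A noisy label $\tilde Y\in\{-1,+1\}$ is generated with noise rates $e_{+1}:=\mathbb P(\tilde Y=-1\mid Y=+1)$, $e_{-1}:=\mathbb P(\tilde Y=+1\mid Y=-1)$, where $\tilde Y$ is conditionally independent of $X$ given $Y$; $\tilde{\mathcal D}$ denotes the distribution of $(X,\tilde Y)$. For a distribution $\mathcal P$ of pairs $(X,V)$ on $\mathcal X\times\{-1,+1\}$, the expected peer loss is defined as $$\mathbb E_{\mathcal P}\bigl[\ell_{\mathrm{peer}}(f(X),V)\bigr]:=\mathbb E\bigl[\ell(f(X),V)\bigr]-\mathbb E\bigl[\ell(f(X_1),V_2)\bigr],$$ where $(X,V)$, $(X_1,V_1)$, $(X_2,V_2)$ are i.i.d. draws from $\mathcal P$ (so $X_1$ and $V_2$ are independent, with the marginal laws of $X$ and $V$). *)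

theory Defs
  imports "HOL-Probability.Probability"
begin

text \<open>Labels are encoded as integers in {-1, 1}; the label space is the discrete
measurable space on int.  A distribution of pairs (X, V) is a measure P on
borel \<Otimes> count_space UNIV.\<close>

abbreviation label_space :: "int measure" where
  "label_space \<equiv> count_space UNIV"

text \<open>Expected peer loss: E[l(f X, V)] - E[l(f X1, V2)], where X1 and V2 are
independent with the marginal laws of X and V, i.e. the second expectation is
taken w.r.t. the product of the two marginals of P.\<close>

definition peer_risk ::
  "('x::topological_space \<times> int) measure \<Rightarrow> (real \<Rightarrow> int \<Rightarrow> real) \<Rightarrow> ('x \<Rightarrow> real) \<Rightarrow> real" where
  "peer_risk P l f =
     (\<integral>z. l (f (fst z)) (snd z) \<partial>P)
     - (\<integral>z. l (f (fst z)) (snd z) \<partial>(distr P borel fst \<Otimes>\<^sub>M distr P label_space snd))"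

end

theory Submission
  imports Defs
begin


lemma cond_ext:
  fixes X :: "'a \<Rightarrow> 'b" and u :: "'b \<Rightarrow> real"
  assumes M: "prob_space M" and Xm: "X \<in> measurable M N"
    and P: "{\<omega>\<in>space M. P \<omega>} \<in> sets M" and Q: "{\<omega>\<in>space M. Q \<omega>} \<in> sets M"
    and q: "0 \<le> q" and r: "0 \<le> r"
    and eq: "\<And>A. A \<in> sets N \<Longrightarrow> measure M {\<omega>\<in>space M. X \<omega> \<in> A \<and> P \<omega>} * q
                 = measure M {\<omega>\<in>space M. X \<omega> \<in> A \<and> Q \<omega>} * r"
    and u: "u \<in> borel_measurable N"
  shows "(\<integral>\<omega>. u (X \<omega>) * indicator {\<omega>\<in>space M. P \<omega>} \<omega> \<partial>M) * q
       = (\<integral>\<omega>. u (X \<omega>) * indicator {\<omega>\<in>space M. Q \<omega>} \<omega> \<partial>M) * r"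
proof -
  interpret prob_space M by fact
  define SP where "SP = {\<omega>\<in>space M. P \<omega>}"
  define SQ where "SQ = {\<omega>\<in>space M. Q \<omega>}"
  have SP[measurable]: "SP \<in> sets M" and SQ[measurable]: "SQ \<in> sets M" using P Q by (auto simp: SP_def SQ_def)
  note Xm[measurable] u[measurable]
  have em: "emeasure (distr (density M (\<lambda>\<omega>. ennreal (c * indicator S \<omega>))) N X) A
      = ennreal (c * measure M {\<omega>\<in>space M. X \<omega> \<in> A \<and> \<omega> \<in> S})"
    if A: "A \<in> sets N" and S: "S \<in> sets M" and c: "0 \<le> c" for A S c
  proof -
    have "emeasure (distr (density M (\<lambda>\<omega>. ennreal (c * indicator S \<omega>))) N X) A
        = emeasure (density M (\<lambda>\<omega>. ennreal (c * indicator S \<omega>))) (X -` A \<inter> space M)"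
      using A S by (subst emeasure_distr) auto
    also have "\<dots> = (\<integral>\<^sup>+\<omega>. ennreal (c * indicator S \<omega>) * indicator (X -` A \<inter> space M) \<omega> \<partial>M)"
      using A S by (subst emeasure_density) auto
    also have "\<dots> = (\<integral>\<^sup>+\<omega>. ennreal c * indicator {\<omega>\<in>space M. X \<omega> \<in> A \<and> \<omega> \<in> S} \<omega> \<partial>M)"
      using c by (intro nn_integral_cong) (auto split: split_indicator)
    also have "\<dots> = ennreal c * emeasure M {\<omega>\<in>space M. X \<omega> \<in> A \<and> \<omega> \<in> S}"
      using A S by (subst nn_integral_cmult_indicator) auto
    also have "\<dots> = ennreal (c * measure M {\<omega>\<in>space M. X \<omega> \<in> A \<and> \<omega> \<in> S})"
      using c by (simp add: emeasure_eq_measure ennreal_mult)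
    finally show ?thesis .
  qed
  have eqm: "distr (density M (\<lambda>\<omega>. ennreal (q * indicator SP \<omega>))) N X
           = distr (density M (\<lambda>\<omega>. ennreal (r * indicator SQ \<omega>))) N X"
  proof (rule measure_eqI)
    fix A assume A: "A \<in> sets (distr (density M (\<lambda>\<omega>. ennreal (q * indicator SP \<omega>))) N X)"
    then have A': "A \<in> sets N" by simp
    have 1: "{\<omega>\<in>space M. X \<omega> \<in> A \<and> \<omega> \<in> SP} = {\<omega>\<in>space M. X \<omega> \<in> A \<and> P \<omega>}"
      by (auto simp: SP_def)
    have 2: "{\<omega>\<in>space M. X \<omega> \<in> A \<and> \<omega> \<in> SQ} = {\<omega>\<in>space M. X \<omega> \<in> A \<and> Q \<omega>}"
      by (auto simp: SQ_def)
    show "emeasure (distr (density M (\<lambda>\<omega>. ennreal (q * indicator SP \<omega>))) N X) A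
        = emeasure (distr (density M (\<lambda>\<omega>. ennreal (r * indicator SQ \<omega>))) N X) A"
      using em[OF A' SP q] em[OF A' SQ r] eq[OF A'] 1 2 by (simp add: mult.commute)
  qed simp
  have int: "(\<integral>x. u x \<partial>distr (density M (\<lambda>\<omega>. ennreal (c * indicator S \<omega>))) N X)
        = (\<integral>\<omega>. u (X \<omega>) * indicator S \<omega> \<partial>M) * c"
    if S: "S \<in> sets M" and c: "0 \<le> c" for S c
  proof -
    have "(\<integral>x. u x \<partial>distr (density M (\<lambda>\<omega>. ennreal (c * indicator S \<omega>))) N X)
       = (\<integral>\<omega>. u (X \<omega>) \<partial>density M (\<lambda>\<omega>. ennreal (c * indicator S \<omega>)))"
      using S by (subst integral_distr) auto
    also have "\<dots> = (\<integral>\<omega>. (c * indicator S \<omega>) *\<^sub>R u (X \<omega>) \<partial>M)"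
      using S c by (subst integral_density) auto
    also have "\<dots> = (\<integral>\<omega>. u (X \<omega>) * indicator S \<omega> \<partial>M) * c"
      by (simp add: mult_ac)
    finally show ?thesis .
  qed
  show ?thesis
    using int[OF SP q] int[OF SQ r] eqm by (simp add: SP_def SQ_def)
qed



lemma prod_term:
  fixes M :: "'a measure" and X :: "'a \<Rightarrow> 'x::topological_space" and V :: "'a \<Rightarrow> int"
    and f :: "'x \<Rightarrow> real" and l :: "real \<Rightarrow> int \<Rightarrow> real"
  assumes M: "prob_space M" and Xm[measurable]: "X \<in> measurable M borel"
    and Vm[measurable]: "V \<in> measurable M label_space"
    and V_vals: "\<And>\<omega>. \<omega> \<in> space M \<Longrightarrow> V \<omega> \<in> {-1, 1}"
    and gm[measurable]: "(\<lambda>z. l (f (fst z)) (snd z)) \<in> borel_measurable (borel \<Otimes>\<^sub>M label_space)"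
    and int_prod: "integrable
                  (distr (distr M (borel \<Otimes>\<^sub>M label_space) (\<lambda>\<omega>. (X \<omega>, V \<omega>))) borel fst
                   \<Otimes>\<^sub>M distr (distr M (borel \<Otimes>\<^sub>M label_space) (\<lambda>\<omega>. (X \<omega>, V \<omega>))) label_space snd)
                  (\<lambda>z. l (f (fst z)) (snd z))"
  shows "integrable M (\<lambda>\<omega>. l (f (X \<omega>)) 1 * measure M {\<omega>\<in>space M. V \<omega> = 1}
                          + l (f (X \<omega>)) (-1) * measure M {\<omega>\<in>space M. V \<omega> = -1})"
    and "(\<integral>z. l (f (fst z)) (snd z) \<partial>(distr (distr M (borel \<Otimes>\<^sub>M label_space) (\<lambda>\<omega>. (X \<omega>, V \<omega>))) borel fst
                   \<Otimes>\<^sub>M distr (distr M (borel \<Otimes>\<^sub>M label_space) (\<lambda>\<omega>. (X \<omega>, V \<omega>))) label_space snd))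
         = (\<integral>\<omega>. l (f (X \<omega>)) 1 * measure M {\<omega>\<in>space M. V \<omega> = 1}
                          + l (f (X \<omega>)) (-1) * measure M {\<omega>\<in>space M. V \<omega> = -1} \<partial>M)"
proof -
  interpret prob_space M by fact
  define PX where "PX = distr M borel X"
  define PV where "PV = distr M label_space V"
  have e1: "distr (distr M (borel \<Otimes>\<^sub>M label_space) (\<lambda>\<omega>. (X \<omega>, V \<omega>))) borel fst = PX"
    unfolding PX_def by (subst distr_distr) (auto intro!: distr_cong)
  have e2: "distr (distr M (borel \<Otimes>\<^sub>M label_space) (\<lambda>\<omega>. (X \<omega>, V \<omega>))) label_space snd = PV"
    unfolding PV_def by (subst distr_distr) (auto intro!: distr_cong)
  interpret PX: prob_space PX unfolding PX_def by (rule prob_space_distr) simp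
  interpret PV: prob_space PV unfolding PV_def by (rule prob_space_distr) simp
  interpret pair_prob_space PX PV by unfold_locales
  have gv[measurable]: "(\<lambda>x. l (f x) v) \<in> borel_measurable borel" for v
  proof -
    have "(\<lambda>x. (x, v)) \<in> measurable borel (borel \<Otimes>\<^sub>M label_space)" by measurable
    from measurable_compose[OF this gm] show ?thesis by simp
  qed
  define q1 where "q1 = measure M {\<omega>\<in>space M. V \<omega> = 1}"
  define q2 where "q2 = measure M {\<omega>\<in>space M. V \<omega> = -1}"
  have intP: "integrable (PX \<Otimes>\<^sub>M PV) (\<lambda>z. l (f (fst z)) (snd z))" using int_prod e1 e2 by simp
  have inner: "(\<integral>y. l (f x) y \<partial>PV) = l (f x) 1 * q1 + l (f x) (-1) * q2" for x
  proof -
    have "(\<integral>y. l (f x) y \<partial>PV) = (\<integral>\<omega>. l (f x) (V \<omega>) \<partial>M)"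
      unfolding PV_def by (subst integral_distr) auto
    also have "\<dots> = (\<integral>\<omega>. l (f x) 1 * indicator {\<omega>\<in>space M. V \<omega> = 1} \<omega>
                        + l (f x) (-1) * indicator {\<omega>\<in>space M. V \<omega> = -1} \<omega> \<partial>M)"
      by (rule Bochner_Integration.integral_cong) (auto split: split_indicator dest: V_vals)
    also have "\<dots> = l (f x) 1 * q1 + l (f x) (-1) * q2"
      unfolding q1_def q2_def
    proof (subst Bochner_Integration.integral_add)
      have [measurable]: "{\<omega>\<in>space M. V \<omega> = c} \<in> sets M" for c by measurable
      show "integrable M (\<lambda>\<omega>. l (f x) 1 * indicator {\<omega>\<in>space M. V \<omega> = 1} \<omega>)"
        by (intro integrable_mult_right integrable_real_indicator) (auto simp: less_top[symmetric])
      show "integrable M (\<lambda>\<omega>. l (f x) (-1) * indicator {\<omega>\<in>space M. V \<omega> = -1} \<omega>)"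
        by (intro integrable_mult_right integrable_real_indicator) (auto simp: less_top[symmetric])
    qed auto
    finally show ?thesis .
  qed
  have "integrable PX (\<lambda>x. \<integral>y. l (f (fst (x, y))) (snd (x, y)) \<partial>PV)"
    by (rule integrable_fst'[OF intP])
  then have iPX: "integrable PX (\<lambda>x. l (f x) 1 * q1 + l (f x) (-1) * q2)"
    using inner by simp
  then show "integrable M (\<lambda>\<omega>. l (f (X \<omega>)) 1 * q1 + l (f (X \<omega>)) (-1) * q2)"
    unfolding PX_def by (subst (asm) integrable_distr_eq) auto
  have "(\<integral>z. l (f (fst z)) (snd z) \<partial>(PX \<Otimes>\<^sub>M PV)) = (\<integral>x. \<integral>y. l (f (fst (x, y))) (snd (x, y)) \<partial>PV \<partial>PX)"
    by (rule integral_fst'[OF intP, symmetric])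
  also have "\<dots> = (\<integral>x. l (f x) 1 * q1 + l (f x) (-1) * q2 \<partial>PX)"
    using inner by simp
  also have "\<dots> = (\<integral>\<omega>. l (f (X \<omega>)) 1 * q1 + l (f (X \<omega>)) (-1) * q2 \<partial>M)"
    unfolding PX_def by (subst integral_distr) auto
  finally show "(\<integral>z. l (f (fst z)) (snd z) \<partial>(distr (distr M (borel \<Otimes>\<^sub>M label_space) (\<lambda>\<omega>. (X \<omega>, V \<omega>))) borel fst
                   \<Otimes>\<^sub>M distr (distr M (borel \<Otimes>\<^sub>M label_space) (\<lambda>\<omega>. (X \<omega>, V \<omega>))) label_space snd))
         = (\<integral>\<omega>. l (f (X \<omega>)) 1 * q1 + l (f (X \<omega>)) (-1) * q2 \<partial>M)"
    using e1 e2 by simp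
qed


lemma alg:
  fixes B11 B1m Bm1 Bmm r11 r1m rm1 rmm q1 q2 C111 C11m Cmm1 Cmmm :: real
  assumes q1: "q1 > 0" and q2: "q2 > 0" and qs: "q1 + q2 = 1"
    and r1: "r11 + rm1 = q1" and r2: "r1m + rmm = q2"
    and c1: "C111 * q1 = B11 * r11" and c2: "C11m * q2 = B1m * r1m"
    and c3: "Cmm1 * q1 = Bm1 * rm1" and c4: "Cmmm * q2 = Bmm * rmm"
  shows "C111 + C11m + Cmm1 + Cmmm - (B11 + B1m) * (r11 + r1m) - (Bm1 + Bmm) * (rm1 + rmm)
       = (1 - r1m / q2 - rm1 / q1) * (B11 + Bmm - (B11 + B1m) * q1 - (Bm1 + Bmm) * q2)"
proof -
  have R: "(1 - r1m / q2 - rm1 / q1) * (q1 * q2) = q1 * q2 - r1m * q1 - rm1 * q2"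
    using q1 q2 by (simp add: field_simps)
  have "(C111 + C11m + Cmm1 + Cmmm - (B11 + B1m) * (r11 + r1m) - (Bm1 + Bmm) * (rm1 + rmm)) * (q1 * q2)
     = (q1 * q2 - r1m * q1 - rm1 * q2) * (B11 + Bmm - (B11 + B1m) * q1 - (Bm1 + Bmm) * q2)"
    using qs r1 r2 c1 c2 c3 c4 by algebra
  also have "\<dots> = (1 - r1m / q2 - rm1 / q1) * (B11 + Bmm - (B11 + B1m) * q1 - (Bm1 + Bmm) * q2) * (q1 * q2)"
    unfolding R[symmetric] by (simp only: mult_ac)
  finally show ?thesis using q1 q2 by simp
qed

lemma split_Y:
  fixes u :: "'a \<Rightarrow> real" and Y :: "'a \<Rightarrow> int"
  assumes u: "integrable M u" and Ym[measurable]: "Y \<in> measurable M label_space"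
    and Y_vals: "\<And>\<omega>. \<omega> \<in> space M \<Longrightarrow> Y \<omega> \<in> {-1, 1}"
    and S: "{\<omega>\<in>space M. P \<omega>} \<in> sets M"
  shows "(\<integral>\<omega>. u \<omega> * indicator {\<omega>\<in>space M. P \<omega>} \<omega> \<partial>M)
       = (\<integral>\<omega>. u \<omega> * indicator {\<omega>\<in>space M. P \<omega> \<and> Y \<omega> = 1} \<omega> \<partial>M)
       + (\<integral>\<omega>. u \<omega> * indicator {\<omega>\<in>space M. P \<omega> \<and> Y \<omega> = -1} \<omega> \<partial>M)"
proof -
  have s1: "{\<omega>\<in>space M. P \<omega> \<and> Y \<omega> = c} \<in> sets M" for c
  proof -
    have "{\<omega>\<in>space M. P \<omega> \<and> Y \<omega> = c} = {\<omega>\<in>space M. P \<omega>} \<inter> {\<omega>\<in>space M. Y \<omega> = c}" by auto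
    also have "\<dots> \<in> sets M" using S by measurable
    finally show ?thesis .
  qed
  have "(\<integral>\<omega>. u \<omega> * indicator {\<omega>\<in>space M. P \<omega>} \<omega> \<partial>M)
      = (\<integral>\<omega>. u \<omega> * indicator {\<omega>\<in>space M. P \<omega> \<and> Y \<omega> = 1} \<omega>
          + u \<omega> * indicator {\<omega>\<in>space M. P \<omega> \<and> Y \<omega> = -1} \<omega> \<partial>M)"
    by (rule Bochner_Integration.integral_cong) (auto split: split_indicator dest: Y_vals)
  also have "\<dots> = (\<integral>\<omega>. u \<omega> * indicator {\<omega>\<in>space M. P \<omega> \<and> Y \<omega> = 1} \<omega> \<partial>M)
       + (\<integral>\<omega>. u \<omega> * indicator {\<omega>\<in>space M. P \<omega> \<and> Y \<omega> = -1} \<omega> \<partial>M)"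
    using s1 u by (intro Bochner_Integration.integral_add integrable_real_mult_indicator)
  finally show ?thesis .
qed

lemma split_Y0:
  fixes u :: "'a \<Rightarrow> real" and Y :: "'a \<Rightarrow> int"
  assumes u: "integrable M u" and Ym[measurable]: "Y \<in> measurable M label_space"
    and Y_vals: "\<And>\<omega>. \<omega> \<in> space M \<Longrightarrow> Y \<omega> \<in> {-1, 1}"
  shows "(\<integral>\<omega>. u \<omega> \<partial>M)
       = (\<integral>\<omega>. u \<omega> * indicator {\<omega>\<in>space M. Y \<omega> = 1} \<omega> \<partial>M)
       + (\<integral>\<omega>. u \<omega> * indicator {\<omega>\<in>space M. Y \<omega> = -1} \<omega> \<partial>M)"
proof -
  have "(\<integral>\<omega>. u \<omega> \<partial>M) = (\<integral>\<omega>. u \<omega> * indicator {\<omega>\<in>space M. True} \<omega> \<partial>M)"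
    by (rule Bochner_Integration.integral_cong) auto
  also have "\<dots> = (\<integral>\<omega>. u \<omega> * indicator {\<omega>\<in>space M. True \<and> Y \<omega> = 1} \<omega> \<partial>M)
       + (\<integral>\<omega>. u \<omega> * indicator {\<omega>\<in>space M. True \<and> Y \<omega> = -1} \<omega> \<partial>M)"
    by (rule split_Y[OF u Ym Y_vals]) auto
  finally show ?thesis by simp
qed

lemma measure_split_Y:
  fixes Y :: "'a \<Rightarrow> int"
  assumes Ym[measurable]: "Y \<in> measurable M label_space"
    and Y_vals: "\<And>\<omega>. \<omega> \<in> space M \<Longrightarrow> Y \<omega> \<in> {-1, 1}"
    and S: "{\<omega>\<in>space M. P \<omega>} \<in> sets M" and fin: "finite_measure M"
  shows "measure M {\<omega>\<in>space M. P \<omega>}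
       = measure M {\<omega>\<in>space M. P \<omega> \<and> Y \<omega> = 1} + measure M {\<omega>\<in>space M. P \<omega> \<and> Y \<omega> = -1}"
proof -
  interpret finite_measure M by fact
  have s1: "{\<omega>\<in>space M. P \<omega> \<and> Y \<omega> = c} \<in> sets M" for c
  proof -
    have "{\<omega>\<in>space M. P \<omega> \<and> Y \<omega> = c} = {\<omega>\<in>space M. P \<omega>} \<inter> {\<omega>\<in>space M. Y \<omega> = c}" by auto
    also have "\<dots> \<in> sets M" using S by measurable
    finally show ?thesis .
  qed
  have "{\<omega>\<in>space M. P \<omega>} = {\<omega>\<in>space M. P \<omega> \<and> Y \<omega> = 1} \<union> {\<omega>\<in>space M. P \<omega> \<and> Y \<omega> = -1}"
    using Y_vals by auto
  then show ?thesis using s1 by (simp add: finite_measure_Union) (subst finite_measure_Union; auto)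
qed

lemma peer_decomp:
  fixes M :: "'a measure" and X :: "'a \<Rightarrow> 'x::topological_space" and V :: "'a \<Rightarrow> int"
    and f :: "'x \<Rightarrow> real" and l :: "real \<Rightarrow> int \<Rightarrow> real"
  assumes M: "prob_space M" and Xm[measurable]: "X \<in> measurable M borel"
    and Vm[measurable]: "V \<in> measurable M label_space"
    and V_vals: "\<And>\<omega>. \<omega> \<in> space M \<Longrightarrow> V \<omega> \<in> {-1, 1}"
    and gm[measurable]: "(\<lambda>z. l (f (fst z)) (snd z)) \<in> borel_measurable (borel \<Otimes>\<^sub>M label_space)"
    and int_prod: "integrable
                  (distr (distr M (borel \<Otimes>\<^sub>M label_space) (\<lambda>\<omega>. (X \<omega>, V \<omega>))) borel fst
                   \<Otimes>\<^sub>M distr (distr M (borel \<Otimes>\<^sub>M label_space) (\<lambda>\<omega>. (X \<omega>, V \<omega>))) label_space snd)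
                  (\<lambda>z. l (f (fst z)) (snd z))"
    and i1: "integrable M (\<lambda>\<omega>. l (f (X \<omega>)) 1)"
    and i2: "integrable M (\<lambda>\<omega>. l (f (X \<omega>)) (-1))"
  shows "peer_risk (distr M (borel \<Otimes>\<^sub>M label_space) (\<lambda>\<omega>. (X \<omega>, V \<omega>))) l f
       = (\<integral>\<omega>. l (f (X \<omega>)) 1 * indicator {\<omega>\<in>space M. V \<omega> = 1} \<omega> \<partial>M)
       + (\<integral>\<omega>. l (f (X \<omega>)) (-1) * indicator {\<omega>\<in>space M. V \<omega> = -1} \<omega> \<partial>M)
       - (\<integral>\<omega>. l (f (X \<omega>)) 1 \<partial>M) * measure M {\<omega>\<in>space M. V \<omega> = 1}
       - (\<integral>\<omega>. l (f (X \<omega>)) (-1) \<partial>M) * measure M {\<omega>\<in>space M. V \<omega> = -1}"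
proof -
  interpret prob_space M by fact
  have s[measurable]: "{\<omega>\<in>space M. V \<omega> = c} \<in> sets M" for c by measurable
  have "(\<integral>z. l (f (fst z)) (snd z) \<partial>distr M (borel \<Otimes>\<^sub>M label_space) (\<lambda>\<omega>. (X \<omega>, V \<omega>)))
      = (\<integral>\<omega>. l (f (X \<omega>)) (V \<omega>) \<partial>M)"
    by (subst integral_distr) auto
  also have "\<dots> = (\<integral>\<omega>. l (f (X \<omega>)) 1 * indicator {\<omega>\<in>space M. V \<omega> = 1} \<omega>
       + l (f (X \<omega>)) (-1) * indicator {\<omega>\<in>space M. V \<omega> = -1} \<omega> \<partial>M)"
    by (rule Bochner_Integration.integral_cong) (auto split: split_indicator dest: V_vals)
  also have "\<dots> = (\<integral>\<omega>. l (f (X \<omega>)) 1 * indicator {\<omega>\<in>space M. V \<omega> = 1} \<omega> \<partial>M)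
       + (\<integral>\<omega>. l (f (X \<omega>)) (-1) * indicator {\<omega>\<in>space M. V \<omega> = -1} \<omega> \<partial>M)"
    using i1 i2 by (intro Bochner_Integration.integral_add integrable_real_mult_indicator s)
  finally have J: "(\<integral>z. l (f (fst z)) (snd z) \<partial>distr M (borel \<Otimes>\<^sub>M label_space) (\<lambda>\<omega>. (X \<omega>, V \<omega>))) = 
       (\<integral>\<omega>. l (f (X \<omega>)) 1 * indicator {\<omega>\<in>space M. V \<omega> = 1} \<omega> \<partial>M)
       + (\<integral>\<omega>. l (f (X \<omega>)) (-1) * indicator {\<omega>\<in>space M. V \<omega> = -1} \<omega> \<partial>M)" .
  have P: "(\<integral>\<omega>. l (f (X \<omega>)) 1 * measure M {\<omega>\<in>space M. V \<omega> = 1}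
                          + l (f (X \<omega>)) (-1) * measure M {\<omega>\<in>space M. V \<omega> = -1} \<partial>M)
     = (\<integral>\<omega>. l (f (X \<omega>)) 1 \<partial>M) * measure M {\<omega>\<in>space M. V \<omega> = 1}
       + (\<integral>\<omega>. l (f (X \<omega>)) (-1) \<partial>M) * measure M {\<omega>\<in>space M. V \<omega> = -1}"
    using i1 i2 by simp
  have e1: "distr (distr M (borel \<Otimes>\<^sub>M label_space) (\<lambda>\<omega>. (X \<omega>, V \<omega>))) borel fst = distr M borel X"
    by (subst distr_distr) (auto intro!: distr_cong)
  have e2: "distr (distr M (borel \<Otimes>\<^sub>M label_space) (\<lambda>\<omega>. (X \<omega>, V \<omega>))) label_space snd = distr M label_space V"
    by (subst distr_distr) (auto intro!: distr_cong)
  show ?thesis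
    unfolding peer_risk_def J
    using prod_term(2)[OF M Xm Vm V_vals gm int_prod] P e1 e2 by simp
qed

theorem lemma2:
  fixes M :: "'a measure"
    and X :: "'a \<Rightarrow> real ^ 'd"
    and Y Yt :: "'a \<Rightarrow> int"
    and f :: "real ^ 'd \<Rightarrow> real"
    and l :: "real \<Rightarrow> int \<Rightarrow> real"
    and p e_pos e_neg :: real
  assumes M: "prob_space M"
    and X_meas: "X \<in> measurable M borel"
    and Y_meas: "Y \<in> measurable M label_space"
    and Yt_meas: "Yt \<in> measurable M label_space"
    and Y_vals: "\<And>\<omega>. \<omega> \<in> space M \<Longrightarrow> Y \<omega> \<in> {-1, 1}"
    and Yt_vals: "\<And>\<omega>. \<omega> \<in> space M \<Longrightarrow> Yt \<omega> \<in> {-1, 1}"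
    and p_def: "p = measure M {\<omega> \<in> space M. Y \<omega> = 1}"
    and p_pos: "0 < p" and p_lt1: "p < 1"
    and e_pos_def: "e_pos = measure M {\<omega> \<in> space M. Yt \<omega> = -1 \<and> Y \<omega> = 1}
                             / measure M {\<omega> \<in> space M. Y \<omega> = 1}"
    and e_neg_def: "e_neg = measure M {\<omega> \<in> space M. Yt \<omega> = 1 \<and> Y \<omega> = -1}
                             / measure M {\<omega> \<in> space M. Y \<omega> = -1}"
    and cond_indep: "\<And>A b c. A \<in> sets borel \<Longrightarrow>
          measure M {\<omega> \<in> space M. X \<omega> \<in> A \<and> Yt \<omega> = b \<and> Y \<omega> = c}
            * measure M {\<omega> \<in> space M. Y \<omega> = c}
          = measure M {\<omega> \<in> space M. X \<omega> \<in> A \<and> Y \<omega> = c}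
            * measure M {\<omega> \<in> space M. Yt \<omega> = b \<and> Y \<omega> = c}"
    and f_meas: "f \<in> borel_measurable borel"
    and l_nonneg: "\<And>t y. y \<in> {-1, 1} \<Longrightarrow> 0 \<le> l t y"
    and int_D: "integrable (distr M (borel \<Otimes>\<^sub>M label_space) (\<lambda>\<omega>. (X \<omega>, Y \<omega>)))
                  (\<lambda>z. l (f (fst z)) (snd z))"
    and int_D_prod: "integrable
                  (distr (distr M (borel \<Otimes>\<^sub>M label_space) (\<lambda>\<omega>. (X \<omega>, Y \<omega>))) borel fst
                   \<Otimes>\<^sub>M distr (distr M (borel \<Otimes>\<^sub>M label_space) (\<lambda>\<omega>. (X \<omega>, Y \<omega>))) label_space snd)
                  (\<lambda>z. l (f (fst z)) (snd z))"
    and int_Dt: "integrable (distr M (borel \<Otimes>\<^sub>M label_space) (\<lambda>\<omega>. (X \<omega>, Yt \<omega>)))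
                  (\<lambda>z. l (f (fst z)) (snd z))"
    and int_Dt_prod: "integrable
                  (distr (distr M (borel \<Otimes>\<^sub>M label_space) (\<lambda>\<omega>. (X \<omega>, Yt \<omega>))) borel fst
                   \<Otimes>\<^sub>M distr (distr M (borel \<Otimes>\<^sub>M label_space) (\<lambda>\<omega>. (X \<omega>, Yt \<omega>))) label_space snd)
                  (\<lambda>z. l (f (fst z)) (snd z))"
  shows "peer_risk (distr M (borel \<Otimes>\<^sub>M label_space) (\<lambda>\<omega>. (X \<omega>, Yt \<omega>))) l f
         = (1 - e_neg - e_pos) * peer_risk (distr M (borel \<Otimes>\<^sub>M label_space) (\<lambda>\<omega>. (X \<omega>, Y \<omega>))) l f"
  
proof -
  interpret prob_space M by fact
  note [measurable] = X_meas Y_meas Yt_meas f_meas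
  have gm[measurable]: "(\<lambda>z. l (f (fst z)) (snd z)) \<in> borel_measurable (borel \<Otimes>\<^sub>M label_space)"
    using borel_measurable_integrable[OF int_D] by simp
  have gv[measurable]: "(\<lambda>x. l (f x) v) \<in> borel_measurable borel" for v
  proof -
    have "(\<lambda>x. (x, v)) \<in> measurable borel (borel \<Otimes>\<^sub>M label_space)" by measurable
    from measurable_compose[OF this gm] show ?thesis by simp
  qed
  define q1 where "q1 = measure M {\<omega>\<in>space M. Y \<omega> = 1}"
  define q2 where "q2 = measure M {\<omega>\<in>space M. Y \<omega> = -1}"
  have qs: "q1 + q2 = 1"
  proof -
    have "measure M {\<omega>\<in>space M. True} = q1 + q2"
      unfolding q1_def q2_def
      using measure_split_Y[OF Y_meas Y_vals, of "\<lambda>_. True"] by simp (unfold_locales)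
    then show ?thesis by (simp add: prob_space)
  qed
  have q1: "q1 > 0" using p_pos p_def q1_def by simp
  have q2: "q2 > 0" using p_lt1 p_def q1_def qs by simp
  have G: "integrable M (\<lambda>\<omega>. l (f (X \<omega>)) 1 * q1 + l (f (X \<omega>)) (-1) * q2)"
    using prod_term(1)[OF M X_meas Y_meas Y_vals gm int_D_prod] unfolding q1_def q2_def .
  have i1: "integrable M (\<lambda>\<omega>. l (f (X \<omega>)) 1)"
  proof (rule Bochner_Integration.integrable_bound)
    show "integrable M (\<lambda>\<omega>. (l (f (X \<omega>)) 1 * q1 + l (f (X \<omega>)) (-1) * q2) / q1)"
      using G by simp
    show "AE \<omega> in M. norm (l (f (X \<omega>)) 1) \<le> norm ((l (f (X \<omega>)) 1 * q1 + l (f (X \<omega>)) (-1) * q2) / q1)"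
      using q1 q2 l_nonneg[of 1] l_nonneg[of "-1"] by (auto simp: field_simps)
  qed simp
  have i2: "integrable M (\<lambda>\<omega>. l (f (X \<omega>)) (-1))"
  proof (rule Bochner_Integration.integrable_bound)
    show "integrable M (\<lambda>\<omega>. (l (f (X \<omega>)) 1 * q1 + l (f (X \<omega>)) (-1) * q2) / q2)"
      using G by simp
    show "AE \<omega> in M. norm (l (f (X \<omega>)) (-1)) \<le> norm ((l (f (X \<omega>)) 1 * q1 + l (f (X \<omega>)) (-1) * q2) / q2)"
      using q1 q2 l_nonneg[of 1] l_nonneg[of "-1"] by (auto simp: field_simps)
  qed simp
  have RY: "peer_risk (distr M (borel \<Otimes>\<^sub>M label_space) (\<lambda>\<omega>. (X \<omega>, Y \<omega>))) l f
       = (\<integral>\<omega>. l (f (X \<omega>)) 1 * indicator {\<omega>\<in>space M. Y \<omega> = 1} \<omega> \<partial>M)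
       + (\<integral>\<omega>. l (f (X \<omega>)) (-1) * indicator {\<omega>\<in>space M. Y \<omega> = -1} \<omega> \<partial>M)
       - (\<integral>\<omega>. l (f (X \<omega>)) 1 \<partial>M) * q1
       - (\<integral>\<omega>. l (f (X \<omega>)) (-1) \<partial>M) * q2"
    unfolding q1_def q2_def by (rule peer_decomp[OF M X_meas Y_meas Y_vals gm int_D_prod i1 i2])
  have RYt: "peer_risk (distr M (borel \<Otimes>\<^sub>M label_space) (\<lambda>\<omega>. (X \<omega>, Yt \<omega>))) l f
       = (\<integral>\<omega>. l (f (X \<omega>)) 1 * indicator {\<omega>\<in>space M. Yt \<omega> = 1} \<omega> \<partial>M)
       + (\<integral>\<omega>. l (f (X \<omega>)) (-1) * indicator {\<omega>\<in>space M. Yt \<omega> = -1} \<omega> \<partial>M)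
       - (\<integral>\<omega>. l (f (X \<omega>)) 1 \<partial>M) * measure M {\<omega>\<in>space M. Yt \<omega> = 1}
       - (\<integral>\<omega>. l (f (X \<omega>)) (-1) \<partial>M) * measure M {\<omega>\<in>space M. Yt \<omega> = -1}"
    by (rule peer_decomp[OF M X_meas Yt_meas Yt_vals gm int_Dt_prod i1 i2])
  have st[measurable]: "{\<omega>\<in>space M. Yt \<omega> = b} \<in> sets M" for b by measurable
  have st2[measurable]: "{\<omega>\<in>space M. Yt \<omega> = b \<and> Y \<omega> = c} \<in> sets M" for b c by measurable
  have fm: "finite_measure M" by unfold_locales
  note sY = split_Y[OF _ Y_meas Y_vals st]
  note sY0 = split_Y0[OF _ Y_meas Y_vals]
  note mY = measure_split_Y[OF Y_meas Y_vals st fm]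
  have CI: "(\<integral>\<omega>. l (f (X \<omega>)) v * indicator {\<omega>\<in>space M. Yt \<omega> = b \<and> Y \<omega> = c} \<omega> \<partial>M)
              * measure M {\<omega>\<in>space M. Y \<omega> = c}
          = (\<integral>\<omega>. l (f (X \<omega>)) v * indicator {\<omega>\<in>space M. Y \<omega> = c} \<omega> \<partial>M)
              * measure M {\<omega>\<in>space M. Yt \<omega> = b \<and> Y \<omega> = c}" for v b c
    by (rule cond_ext[OF M X_meas, where u = "\<lambda>x. l (f x) v"]) (auto intro: cond_indep)
  define B11 where "B11 = (\<integral>\<omega>. l (f (X \<omega>)) 1 * indicator {\<omega>\<in>space M. Y \<omega> = 1} \<omega> \<partial>M)"
  define B1m where "B1m = (\<integral>\<omega>. l (f (X \<omega>)) 1 * indicator {\<omega>\<in>space M. Y \<omega> = -1} \<omega> \<partial>M)"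
  define Bm1 where "Bm1 = (\<integral>\<omega>. l (f (X \<omega>)) (-1) * indicator {\<omega>\<in>space M. Y \<omega> = 1} \<omega> \<partial>M)"
  define Bmm where "Bmm = (\<integral>\<omega>. l (f (X \<omega>)) (-1) * indicator {\<omega>\<in>space M. Y \<omega> = -1} \<omega> \<partial>M)"
  define C111 where "C111 = (\<integral>\<omega>. l (f (X \<omega>)) 1 * indicator {\<omega>\<in>space M. Yt \<omega> = 1 \<and> Y \<omega> = 1} \<omega> \<partial>M)"
  define C11m where "C11m = (\<integral>\<omega>. l (f (X \<omega>)) 1 * indicator {\<omega>\<in>space M. Yt \<omega> = 1 \<and> Y \<omega> = -1} \<omega> \<partial>M)"
  define Cmm1 where "Cmm1 = (\<integral>\<omega>. l (f (X \<omega>)) (-1) * indicator {\<omega>\<in>space M. Yt \<omega> = -1 \<and> Y \<omega> = 1} \<omega> \<partial>M)"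
  define Cmmm where "Cmmm = (\<integral>\<omega>. l (f (X \<omega>)) (-1) * indicator {\<omega>\<in>space M. Yt \<omega> = -1 \<and> Y \<omega> = -1} \<omega> \<partial>M)"
  define r11 where "r11 = measure M {\<omega>\<in>space M. Yt \<omega> = 1 \<and> Y \<omega> = 1}"
  define r1m where "r1m = measure M {\<omega>\<in>space M. Yt \<omega> = 1 \<and> Y \<omega> = -1}"
  define rm1 where "rm1 = measure M {\<omega>\<in>space M. Yt \<omega> = -1 \<and> Y \<omega> = 1}"
  define rmm where "rmm = measure M {\<omega>\<in>space M. Yt \<omega> = -1 \<and> Y \<omega> = -1}"
  have E1: "(\<integral>\<omega>. l (f (X \<omega>)) 1 * indicator {\<omega>\<in>space M. Yt \<omega> = 1} \<omega> \<partial>M) = C111 + C11m"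
    unfolding C111_def C11m_def by (rule sY[OF i1])
  have E2: "(\<integral>\<omega>. l (f (X \<omega>)) (-1) * indicator {\<omega>\<in>space M. Yt \<omega> = -1} \<omega> \<partial>M) = Cmm1 + Cmmm"
    unfolding Cmm1_def Cmmm_def by (rule sY[OF i2])
  have E3: "(\<integral>\<omega>. l (f (X \<omega>)) 1 \<partial>M) = B11 + B1m"
    unfolding B11_def B1m_def by (rule sY0[OF i1])
  have E4: "(\<integral>\<omega>. l (f (X \<omega>)) (-1) \<partial>M) = Bm1 + Bmm"
    unfolding Bm1_def Bmm_def by (rule sY0[OF i2])
  have E5: "measure M {\<omega>\<in>space M. Yt \<omega> = 1} = r11 + r1m"
    unfolding r11_def r1m_def by (rule mY)
  have E6: "measure M {\<omega>\<in>space M. Yt \<omega> = -1} = rm1 + rmm"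
    unfolding rm1_def rmm_def by (rule mY)
  have sy: "{\<omega>\<in>space M. Y \<omega> = c} \<in> sets M" for c by measurable
  have swp: "{\<omega>\<in>space M. Y \<omega> = c \<and> Yt \<omega> = b} = {\<omega>\<in>space M. Yt \<omega> = b \<and> Y \<omega> = c}" for b c by auto
  have F1: "r11 + rm1 = q1"
    unfolding r11_def rm1_def q1_def
    using measure_split_Y[OF Yt_meas Yt_vals sy fm, of "1"] swp by simp
  have F2: "r1m + rmm = q2"
    unfolding r1m_def rmm_def q2_def
    using measure_split_Y[OF Yt_meas Yt_vals sy fm, of "-1"] swp by simp
  have RYt': "peer_risk (distr M (borel \<Otimes>\<^sub>M label_space) (\<lambda>\<omega>. (X \<omega>, Yt \<omega>))) l f
     = C111 + C11m + Cmm1 + Cmmm - (B11 + B1m) * (r11 + r1m) - (Bm1 + Bmm) * (rm1 + rmm)"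
    unfolding RYt E1 E2 E3 E4 E5 E6 by simp
  have RY': "peer_risk (distr M (borel \<Otimes>\<^sub>M label_space) (\<lambda>\<omega>. (X \<omega>, Y \<omega>))) l f
     = B11 + Bmm - (B11 + B1m) * q1 - (Bm1 + Bmm) * q2"
    unfolding RY E3 E4 B11_def Bmm_def by simp
  have ep: "e_pos = rm1 / q1" unfolding e_pos_def rm1_def q1_def ..
  have en: "e_neg = r1m / q2" unfolding e_neg_def r1m_def q2_def ..
  show ?thesis
    unfolding RY' RYt' ep en
  proof (rule alg[OF q1 q2 qs F1 F2])
    show "C111 * q1 = B11 * r11" unfolding C111_def B11_def r11_def q1_def by (rule CI)
    show "C11m * q2 = B1m * r1m" unfolding C11m_def B1m_def r1m_def q2_def by (rule CI)
    show "Cmm1 * q1 = Bm1 * rm1" unfolding Cmm1_def Bm1_def rm1_def q1_def by (rule CI)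
    show "Cmmm * q2 = Bmm * rmm" unfolding Cmmm_def Bmm_def rmm_def q2_def by (rule CI)
  qed
qed

end
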